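(* For every $k\in\mathbb N$ and $t\in(0,1)$, the point $\lambda=-\dfrac{1-t}{k+2-(k+1)t}$ does not belong to the limit set $\mathcal L(A_{\infty,k,t})$.
   Context: For $x\in\mathbb R$, $x_+=\max\{x,0\}$. For $k\in\mathbb{N}$ and $t\in(0,1)$, $A_{\infty,k,t}=(A(i,j))_{i,j\ge1}$ is the infinite Toeplitz Hessenberg matrix with $A(i,j)=a_{j-i}$ for $j\ge i$, $A(i+1,i)=1$, and $A(i,j)=0$ for $i\ge j+2$, where $(a_0,a_1,\ldots)$ is the unique sequence for which the leading principal minors satisfy $\det A(\{1,\dots,n\})=t^{(n-k-1)_+}$ for all $n\in\mathbb N$. $A_{n,k,t}$ is its leading principal $n\times n$ submatrix. The limit set $\mathcal L(A_{\infty,k,t})$ is the set of all $\lambda\in\mathbb C$ such that $\lambda=\lim_{m\to\infty}\lambda_m$ for some increasing sequence $i_m\to\infty$ and eigenvalues $\lambda_m\in\sigma(A_{i_m,k,t})$. *)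

theory Defs
  imports "Jordan_Normal_Form.Char_Poly"
begin

text \<open>Leading principal n x n submatrix (0-based indices) of the infinite Toeplitz
  Hessenberg matrix with entries A(i,j) = a (j - i) for j >= i, A(i+1,i) = 1,
  and 0 further below the diagonal.\<close>
definition toeplitz_hessenberg :: "(nat \<Rightarrow> real) \<Rightarrow> nat \<Rightarrow> real mat" where
  "toeplitz_hessenberg a n =
     mat n n (\<lambda>(i, j). if i \<le> j then a (j - i) else if i = Suc j then 1 else 0)"

text \<open>The unique sequence whose leading principal minors are t^((n-k-1)_+);
  natural-number subtraction realises the positive part.\<close>
definition A_seq :: "nat \<Rightarrow> real \<Rightarrow> nat \<Rightarrow> real" where
  "A_seq k t = (THE a. \<forall>n. det (toeplitz_hessenberg a n) = t ^ (n - k - 1))"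

definition A_mat :: "nat \<Rightarrow> real \<Rightarrow> nat \<Rightarrow> real mat" where
  "A_mat k t n = toeplitz_hessenberg (A_seq k t) n"

definition limit_set :: "(nat \<Rightarrow> real mat) \<Rightarrow> complex set" where
  "limit_set M = {z. \<exists>idx \<mu>. strict_mono idx \<and>
       (\<forall>m. eigenvalue (map_mat complex_of_real (M (idx m))) (\<mu> m)) \<and> \<mu> \<longlonglongrightarrow> z}"

end

theory Submission
  imports Defs "HOL-Computational_Algebra.Formal_Power_Series"
begin


definition thg :: "(nat \<Rightarrow> 'a::comm_ring_1) \<Rightarrow> nat \<Rightarrow> 'a mat" where
  "thg a n = mat n n (\<lambda>(i, j). if i \<le> j then a (j - i) else if i = Suc j then 1 else 0)"

definition Gm :: "(nat \<Rightarrow> 'a::comm_ring_1) \<Rightarrow> (nat \<Rightarrow> 'a) \<Rightarrow> nat \<Rightarrow> 'a mat" where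
  "Gm b a n = mat n n (\<lambda>(i, j). if i = 0 then b j else if i \<le> j then a (j - i) else if i = Suc j then 1 else 0)"

lemma thg_Gm: "thg a n = Gm a a n"
  unfolding thg_def Gm_def by (rule eq_matI) auto

lemma det_Gm1: "det (Gm b a (Suc 0)) = b 0"
  unfolding Gm_def by (simp add: det_single)

lemma det_Gm_step: "det (Gm b a (Suc (Suc n))) = b 0 * det (thg a (Suc n)) - det (Gm (b \<circ> Suc) a (Suc n))"
proof -
  let ?A = "Gm b a (Suc (Suc n))"
  have A: "?A \<in> carrier_mat (Suc (Suc n)) (Suc (Suc n))" unfolding Gm_def by auto
  have "det ?A = (\<Sum>i<Suc (Suc n). ?A $$ (i,0) * cofactor ?A i 0)"
    by (rule laplace_expansion_column[OF A]) auto
  also have "\<dots> = ?A $$ (0,0) * cofactor ?A 0 0 + ?A $$ (1,0) * cofactor ?A 1 0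
      + (\<Sum>i<n. ?A $$ (Suc (Suc i),0) * cofactor ?A (Suc (Suc i)) 0)"
    by (simp only: sum.lessThan_Suc_shift) simp
  also have "(\<Sum>i<n. ?A $$ (Suc (Suc i),0) * cofactor ?A (Suc (Suc i)) 0) = 0"
    by (rule sum.neutral) (auto simp: Gm_def)
  finally have e: "det ?A = ?A $$ (0,0) * cofactor ?A 0 0 + ?A $$ (1,0) * cofactor ?A 1 0" by simp
  have d0: "mat_delete ?A 0 0 = thg a (Suc n)"
    by (rule eq_matI) (auto simp: Gm_def thg_def mat_delete_def)
  have d1: "mat_delete ?A 1 0 = Gm (b \<circ> Suc) a (Suc n)"
    by (rule eq_matI) (auto simp: Gm_def mat_delete_def)
  show ?thesis unfolding e cofactor_def d0 d1 by (simp add: Gm_def)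
qed

lemma det_thg0: "det (thg a 0) = 1"
  unfolding thg_def by (simp add: det_def)

lemma det_Gm_closed: "det (Gm b a (Suc n)) = (\<Sum>r\<le>n. (-1)^r * b r * det (thg a (n - r)))"
proof (induction n arbitrary: b)
  case 0
  then show ?case by (simp add: det_Gm1 det_thg0)
next
  case (Suc n)
  show ?case
    unfolding det_Gm_step Suc.IH sum.atMost_Suc_shift
    by (simp add: sum_negf[symmetric])
qed

lemma det_thg_rec: "det (thg a (Suc n)) = (\<Sum>r\<le>n. (-1)^r * a r * det (thg a (n - r)))"
  using det_Gm_closed[of a a n] by (simp add: thg_Gm)

definition dets :: "(nat \<Rightarrow> 'a::field) \<Rightarrow> 'a fps" where
  "dets a = Abs_fps (\<lambda>n. det (thg a n))"

definition cf :: "(nat \<Rightarrow> 'a::field) \<Rightarrow> 'a fps" where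
  "cf a = Abs_fps (\<lambda>r. if r = 0 then 0 else (-1)^(r-1) * a (r-1))"

lemma dets_eq: "dets a = 1 + cf a * dets a"
proof (rule fps_ext)
  fix n
  show "fps_nth (dets a) n = fps_nth (1 + cf a * dets a) n"
  proof (cases n)
    case 0
    then show ?thesis by (simp add: dets_def cf_def det_thg0)
  next
    case (Suc m)
    have "fps_nth (cf a * dets a) (Suc m) = (\<Sum>i=0..Suc m. fps_nth (cf a) i * fps_nth (dets a) (Suc m - i))"
      by (rule fps_mult_nth)
    also have "\<dots> = (\<Sum>i=0..m. fps_nth (cf a) (Suc i) * fps_nth (dets a) (m - i))"
      unfolding sum.atLeast0_atMost_Suc_shift by (simp add: cf_def)
    also have "\<dots> = det (thg a (Suc m))"
      by (simp add: det_thg_rec cf_def dets_def atMost_atLeast0)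
    finally show ?thesis using Suc by (simp add: dets_def)
  qed
qed

lemma dets_inv:
  fixes a :: "nat \<Rightarrow> 'a::field"
  shows "(1 - cf a) * dets a = 1"
proof -
  have "dets a = 1 + cf a * dets a" by (rule dets_eq)
  then show ?thesis by (simp add: algebra_simps)
qed

definition Tf :: "nat \<Rightarrow> 'a::field \<Rightarrow> 'a fps" where
  "Tf k t = Abs_fps (\<lambda>n. t ^ (n - k - 1))"

lemma Tf0: "fps_nth (Tf k t) 0 = 1" by (simp add: Tf_def)

lemma char_A:
  fixes a :: "nat \<Rightarrow> 'a::field"
  shows "(\<forall>n. det (thg a n) = t ^ (n - k - 1)) \<longleftrightarrow> cf a = 1 - inverse (Tf k t)"
proof
  assume h: "\<forall>n. det (thg a n) = t ^ (n - k - 1)"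
  have "dets a = Tf k t" unfolding dets_def Tf_def using h by simp
  then have "(1 - cf a) * Tf k t = 1" using dets_inv[of a] by simp
  then have "inverse (Tf k t) = 1 - cf a"
    by (metis fps_inverse_unique mult.commute)
  then show "cf a = 1 - inverse (Tf k t)" by simp
next
  assume h: "cf a = 1 - inverse (Tf k t)"
  have "inverse (Tf k t) * dets a = 1" using dets_inv[of a] h by simp
  then have "Tf k t * (inverse (Tf k t) * dets a) = Tf k t" by simp
  then have "dets a = Tf k t"
    by (simp add: mult.assoc[symmetric] inverse_mult_eq_1' Tf0)
  then show "\<forall>n. det (thg a n) = t ^ (n - k - 1)"
    by (metis dets_def Tf_def fps_nth_Abs_fps)
qed

lemma cf_inj: "cf a = cf b \<Longrightarrow> a = b"
proof
  fix j assume "cf a = cf b"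
  then have "fps_nth (cf a) (Suc j) = fps_nth (cf b) (Suc j)" by simp
  then show "a j = b j" by (simp add: cf_def)
qed

lemma A_seq_prop: "\<forall>n. det (toeplitz_hessenberg (A_seq k t) n) = t ^ (n - k - 1)"
proof -
  define C where "C = 1 - inverse (Tf k t :: real fps)"
  define a0 where "a0 = (\<lambda>j. (-1)^j * fps_nth C (Suc j))"
  have C0: "fps_nth C 0 = 0" by (simp add: C_def Tf0)
  have "cf a0 = C"
  proof (rule fps_ext)
    fix r show "fps_nth (cf a0) r = fps_nth C r"
      by (cases r) (auto simp: cf_def a0_def C0 power_mult_distrib[symmetric] power_add[symmetric] 
          simp flip: power_mult)
  qed
  have th: "\<And>a n. toeplitz_hessenberg a n = thg a n"
    unfolding toeplitz_hessenberg_def thg_def ..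
  have ex: "\<forall>n. det (toeplitz_hessenberg a0 n) = t ^ (n - k - 1)"
    unfolding th char_A using \<open>cf a0 = C\<close> C_def by simp
  have un: "\<And>a. \<forall>n. det (toeplitz_hessenberg a n) = t ^ (n - k - 1) \<Longrightarrow> a = a0"
    unfolding th char_A using \<open>cf a0 = C\<close> C_def cf_inj by metis
  show ?thesis unfolding A_seq_def
    by (rule theI[where P="\<lambda>a. \<forall>n. det (toeplitz_hessenberg a n) = t ^ (n - k - 1)", OF ex un])
qed

lemma cr_hom: "comm_ring_hom complex_of_real"
  by unfold_locales auto

lemma det_of_real: "det (map_mat complex_of_real A) = complex_of_real (det A)"
  using comm_ring_hom.hom_det[OF cr_hom] by blast

definition ac :: "nat \<Rightarrow> real \<Rightarrow> nat \<Rightarrow> complex" where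
  "ac k t j = complex_of_real (A_seq k t j)"

definition bl :: "nat \<Rightarrow> real \<Rightarrow> complex \<Rightarrow> nat \<Rightarrow> complex" where
  "bl k t l j = ac k t j - (if j = 0 then l else 0)"

definition Pl :: "nat \<Rightarrow> real \<Rightarrow> complex \<Rightarrow> nat \<Rightarrow> complex" where
  "Pl k t l n = det (thg (bl k t l) n)"

lemma char_eq: "char_matrix (map_mat complex_of_real (A_mat k t n)) l = thg (bl k t l) n"
  by (rule eq_matI) (auto simp: char_matrix_def A_mat_def toeplitz_hessenberg_def thg_def bl_def ac_def)

lemma dets_ac: "dets (ac k t) = Tf k (complex_of_real t)"
proof -
  have "thg (ac k t) n = map_mat complex_of_real (toeplitz_hessenberg (A_seq k t) n)" for n
    by (rule eq_matI) (auto simp: thg_def toeplitz_hessenberg_def ac_def)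
  then have "det (thg (ac k t) n) = complex_of_real t ^ (n - k - 1)" for n
    using A_seq_prop[of k t] by (simp add: det_of_real)
  then show ?thesis by (simp add: dets_def Tf_def)
qed

lemma cf_bl: "cf (bl k t l) = cf (ac k t) - fps_const l * fps_X"
proof (rule fps_ext)
  fix r show "fps_nth (cf (bl k t l)) r = fps_nth (cf (ac k t) - fps_const l * fps_X) r"
    by (cases r) (auto simp: cf_def bl_def fps_X_def)
qed

definition Mc :: "nat \<Rightarrow> real \<Rightarrow> complex fps" where
  "Mc k t = Abs_fps (\<lambda>n. if n = 0 then 1 else if n \<le> Suc k then 1 - complex_of_real t else 0)"

lemma Tf_Mc: "Tf k (complex_of_real t) * (1 - fps_const (complex_of_real t) * fps_X) = Mc k t"
proof (rule fps_ext)
  fix n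
  show "fps_nth (Tf k (complex_of_real t) * (1 - fps_const (complex_of_real t) * fps_X)) n = fps_nth (Mc k t) n"
  proof (cases n)
    case 0 then show ?thesis by (simp add: Tf_def Mc_def algebra_simps)
  next
    case (Suc m)
    have "fps_nth (Tf k (complex_of_real t) * (1 - fps_const (complex_of_real t) * fps_X)) n
        = complex_of_real t ^ (Suc m - k - 1) - complex_of_real t * complex_of_real t ^ (m - k - 1)"
      using Suc by (simp add: algebra_simps Tf_def)
    also have "\<dots> = fps_nth (Mc k t) n"
    proof (cases "m \<le> k")
      case True then show ?thesis using Suc by (simp add: Mc_def)
    next
      case False
      then have "Suc m - k - 1 = Suc (m - k - 1)" by simp
      then show ?thesis using Suc False by (simp add: Mc_def)
    qed
    finally show ?thesis .
  qed
qed

definition acoef :: "real \<Rightarrow> complex \<Rightarrow> nat \<Rightarrow> complex" where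
  "acoef t l i = (if i = 1 then complex_of_real t - l else - l * (1 - complex_of_real t))"

definition Rc :: "nat \<Rightarrow> real \<Rightarrow> complex \<Rightarrow> complex fps" where
  "Rc k t l = Abs_fps (\<lambda>i. if i = 0 then 1 else if i \<le> k + 2 then - acoef t l i else 0)"

lemma Rc_eq: "Rc k t l = 1 - fps_const (complex_of_real t) * fps_X + fps_const l * (fps_X * Mc k t)"
proof (rule fps_ext)
  fix i show "fps_nth (Rc k t l) i = fps_nth (1 - fps_const (complex_of_real t) * fps_X + fps_const l * (fps_X * Mc k t)) i"
    by (auto simp: Rc_def acoef_def Mc_def)
qed

lemma Rc_P: "Rc k t l * dets (bl k t l) = Mc k t"
proof -
  let ?C = "cf (ac k t)" and ?T = "Tf k (complex_of_real t)" and ?M = "Mc k t"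
  let ?tX = "fps_const (complex_of_real t) * fps_X"
  have h1: "(1 - ?C) * ?T = 1" using dets_inv[of "ac k t"] dets_ac by simp
  have "(1 - ?C) * ?M = ((1 - ?C) * ?T) * (1 - ?tX)" by (simp only: Tf_Mc[symmetric] mult.assoc)
  then have h2: "(1 - ?C) * ?M = 1 - ?tX" using h1 by simp
  have "(1 - cf (bl k t l)) * ?M = (1 - ?C) * ?M + fps_const l * (fps_X * ?M)"
    unfolding cf_bl by (simp add: algebra_simps)
  then have "Rc k t l = (1 - cf (bl k t l)) * ?M" unfolding Rc_eq h2 by simp
  then have "Rc k t l * dets (bl k t l) = ?M * ((1 - cf (bl k t l)) * dets (bl k t l))"
    by (simp only: mult.commute mult.left_commute mult.assoc)
  then show ?thesis using dets_inv[of "bl k t l"] by simp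
qed

lemma Pl_rec: "Pl k t l n = fps_nth (Mc k t) n +
   (\<Sum>i=1..k+2. acoef t l i * (if i \<le> n then Pl k t l (n - i) else 0))"
proof -
  have "fps_nth (Rc k t l * dets (bl k t l)) n = (\<Sum>i=0..n. fps_nth (Rc k t l) i * Pl k t l (n - i))"
    unfolding fps_mult_nth by (simp add: dets_def Pl_def)
  then have "fps_nth (Mc k t) n = (\<Sum>i=0..n. fps_nth (Rc k t l) i * Pl k t l (n - i))"
    unfolding Rc_P .
  also have "\<dots> = Pl k t l n + (\<Sum>i=Suc 0..n. fps_nth (Rc k t l) i * Pl k t l (n - i))"
    by (subst sum.atLeast_Suc_atMost) (auto simp: Rc_def)
  also have "(\<Sum>i=Suc 0..n. fps_nth (Rc k t l) i * Pl k t l (n - i))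
      = (\<Sum>i\<in>{i\<in>{1..n}. i \<le> k+2}. - acoef t l i * Pl k t l (n - i))"
    by (subst sum.inter_filter) (auto intro!: sum.cong simp: Rc_def)
  also have "{i\<in>{1..n}. i \<le> k+2} = {i\<in>{1..k+2}. i \<le> n}" by auto
  also have "(\<Sum>i\<in>{i\<in>{1..k+2}. i \<le> n}. - acoef t l i * Pl k t l (n - i))
     = - (\<Sum>i=1..k+2. acoef t l i * (if i \<le> n then Pl k t l (n - i) else 0))"
    by (subst sum.inter_filter) (auto intro!: sum.cong simp: sum_negf[symmetric])
  finally show ?thesis by (simp add: algebra_simps)
qed



definition Qs :: "(nat \<Rightarrow> complex) \<Rightarrow> nat \<Rightarrow> complex" where
  "Qs P n = (\<Sum>l<n. P l)"

definition beta :: "nat \<Rightarrow> (nat \<Rightarrow> real) \<Rightarrow> nat \<Rightarrow> real" where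
  "beta K \<alpha> j = (\<Sum>i=j..K. \<alpha> i)"

definition Bc :: "nat \<Rightarrow> (nat \<Rightarrow> real) \<Rightarrow> real" where
  "Bc K \<alpha> = (\<Sum>j=1..K. beta K \<alpha> j)"

definition sv :: "nat \<Rightarrow> (nat \<Rightarrow> real) \<Rightarrow> (nat \<Rightarrow> complex) \<Rightarrow> nat \<Rightarrow> complex" where
  "sv K \<alpha> P n = (Qs P n - (\<Sum>i=1..K. complex_of_real (\<alpha> i) * Qs P (n - i))) / complex_of_real (Bc K \<alpha>)"

lemma swap_tri: "(\<Sum>i=1..K. \<Sum>j=1..i. f i j) = (\<Sum>j=1..(K::nat). \<Sum>i=j..K. (f i j :: 'a::comm_monoid_add))"
  by (induction K) (auto simp: sum.distrib)

lemma Qs_diff: "i \<le> n \<Longrightarrow> Qs P n - Qs P (n - i) = (\<Sum>j=1..i. P (n - j))"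
proof (induction i)
  case 0 then show ?case by simp
next
  case (Suc i)
  have "n - i = Suc (n - Suc i)" using Suc.prems by simp
  then have "Qs P (n - i) = Qs P (n - Suc i) + P (n - Suc i)" by (simp add: Qs_def)
  then show ?case using Suc by (simp add: algebra_simps)
qed

lemma Qs_step: "1 \<le> i \<Longrightarrow> Qs P (Suc n - i) - Qs P (n - i) = (if i \<le> n then P (n - i) else 0)"
proof (cases "i \<le> n")
  case True
  then have "Suc n - i = Suc (n - i)" by simp
  then show ?thesis using True by (simp add: Qs_def)
qed simp

lemma sdiff:
  assumes "Bc K \<alpha> \<noteq> 0"
  shows "complex_of_real (Bc K \<alpha>) * (sv K \<alpha> P (Suc n) - sv K \<alpha> P n)
     = P n - (\<Sum>i=1..K. complex_of_real (\<alpha> i) * (if i \<le> n then P (n - i) else 0))"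
proof -
  have "complex_of_real (Bc K \<alpha>) * (sv K \<alpha> P (Suc n) - sv K \<alpha> P n)
     = (Qs P (Suc n) - Qs P n) - (\<Sum>i=1..K. complex_of_real (\<alpha> i) * (Qs P (Suc n - i) - Qs P (n - i)))"
  proof -
    have "complex_of_real (Bc K \<alpha>) * (sv K \<alpha> P (Suc n) - sv K \<alpha> P n) =
      (Qs P (Suc n) - (\<Sum>i=1..K. complex_of_real (\<alpha> i) * Qs P (Suc n - i))) -
      (Qs P n - (\<Sum>i=1..K. complex_of_real (\<alpha> i) * Qs P (n - i)))"
      using assms by (simp add: sv_def diff_divide_distrib[symmetric])
    also have "\<dots> = (Qs P (Suc n) - Qs P n) - (\<Sum>i=1..K. complex_of_real (\<alpha> i) * (Qs P (Suc n - i) - Qs P (n - i)))"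
      by (simp add: right_diff_distrib sum_subtractf)
    finally show ?thesis .
  qed
  also have "\<dots> = P n - (\<Sum>i=1..K. complex_of_real (\<alpha> i) * (if i \<le> n then P (n - i) else 0))"
  proof -
    have "Qs P (Suc n) - Qs P n = P n" by (simp add: Qs_def)
    moreover have "(\<Sum>i=1..K. complex_of_real (\<alpha> i) * (Qs P (Suc n - i) - Qs P (n - i)))
       = (\<Sum>i=1..K. complex_of_real (\<alpha> i) * (if i \<le> n then P (n - i) else 0))"
      by (rule sum.cong[OF refl]) (simp add: Qs_step)
    ultimately show ?thesis by simp
  qed
  finally show ?thesis .
qed

lemma sform:
  assumes "Bc K \<alpha> \<noteq> 0" and "(\<Sum>i=1..K. \<alpha> i) = 1" and "K \<le> n"
  shows "complex_of_real (Bc K \<alpha>) * sv K \<alpha> P n = (\<Sum>j=1..K. complex_of_real (beta K \<alpha> j) * P (n - j))"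
proof -
  have "complex_of_real (Bc K \<alpha>) * sv K \<alpha> P n = Qs P n - (\<Sum>i=1..K. complex_of_real (\<alpha> i) * Qs P (n - i))"
    using assms(1) by (simp add: sv_def)
  also have "Qs P n = (\<Sum>i=1..K. complex_of_real (\<alpha> i) * Qs P n)"
    using assms(2) by (simp add: sum_distrib_right[symmetric] flip: of_real_sum)
  also have "(\<Sum>i=1..K. complex_of_real (\<alpha> i) * Qs P n) - (\<Sum>i=1..K. complex_of_real (\<alpha> i) * Qs P (n - i))
     = (\<Sum>i=1..K. \<Sum>j=1..i. complex_of_real (\<alpha> i) * P (n - j))"
    using assms(3) by (simp add: sum_subtractf[symmetric] right_diff_distrib[symmetric] Qs_diff sum_distrib_left)
  also have "\<dots> = (\<Sum>j=1..K. \<Sum>i=j..K. complex_of_real (\<alpha> i) * P (n - j))"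
    by (rule swap_tri)
  also have "\<dots> = (\<Sum>j=1..K. complex_of_real (beta K \<alpha> j) * P (n - j))"
    by (simp add: beta_def sum_distrib_right)
  finally show ?thesis .
qed

lemma beta_props:
  assumes apos: "\<forall>j\<in>{1..K}. 0 \<le> \<alpha> j" and asum: "(\<Sum>i=1..K. \<alpha> i) = 1" and K: "1 \<le> K"
  shows "\<And>j. 1 \<le> j \<Longrightarrow> 0 \<le> beta K \<alpha> j" "\<And>j. 1 \<le> j \<Longrightarrow> beta K \<alpha> j \<le> 1" "1 \<le> Bc K \<alpha>"
proof -
  fix j :: nat assume j: "1 \<le> j"
  show "0 \<le> beta K \<alpha> j" unfolding beta_def using apos j by (intro sum_nonneg) auto
  have "(\<Sum>i=j..K. \<alpha> i) \<le> (\<Sum>i=1..K. \<alpha> i)"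
    by (rule sum_mono2) (use apos j in auto)
  then show "beta K \<alpha> j \<le> 1" using asum by (simp add: beta_def)
next
  have "Bc K \<alpha> = beta K \<alpha> 1 + (\<Sum>j=2..K. beta K \<alpha> j)"
    unfolding Bc_def using K by (simp add: sum.atLeast_Suc_atMost numeral_2_eq_2)
  moreover have "0 \<le> (\<Sum>j=2..K. beta K \<alpha> j)"
    unfolding beta_def using apos by (intro sum_nonneg) auto
  ultimately show "1 \<le> Bc K \<alpha>" using asum by (simp add: beta_def)
qed

lemma step:
  fixes \<alpha> :: "nat \<Rightarrow> real" and a P :: "nat \<Rightarrow> complex"
  assumes K: "1 \<le> K" and apos: "\<forall>j\<in>{1..K}. c \<le> \<alpha> j" and c: "0 < c"
    and asum: "(\<Sum>j=1..K. \<alpha> j) = 1"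
    and th: "0 < \<theta>" "\<theta> < 1" "1 - c \<le> \<theta>^K"
    and nK: "K \<le> n" and rec: "P n = (\<Sum>j=1..K. a j * P (n - j))"
    and ad: "\<forall>j\<in>{1..K}. cmod (a j - \<alpha> j) \<le> d"
    and V: "\<forall>j\<in>{1..K}. cmod (P (n - j)) \<le> V"
    and E: "\<forall>j\<in>{1..K}. \<theta>^(j-1) * cmod (P (n - j) - sv K \<alpha> P n) \<le> E"
  shows "cmod (sv K \<alpha> P (Suc n) - sv K \<alpha> P n) \<le> real K * d * V"
    and "\<forall>j\<in>{1..K}. \<theta>^(j-1) * cmod (P (Suc n - j) - sv K \<alpha> P (Suc n)) \<le> \<theta> * E + 2 * real K * d * V"
proof -
  define s where "s = sv K \<alpha> P n"
  define s' where "s' = sv K \<alpha> P (Suc n)"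
  define B where "B = Bc K \<alpha>"
  define e where "e = (\<lambda>j. P (n - j) - s)"
  have apos0: "\<forall>j\<in>{1..K}. 0 \<le> \<alpha> j" using apos c by force
  note bp = beta_props[OF apos0 asum K]
  have B1: "1 \<le> B" using bp(3) B_def by simp
  have B0: "Bc K \<alpha> \<noteq> 0" using B1 B_def by simp
  have E0: "0 \<le> E" using E K by (meson atLeastAtMost_iff le_refl mult_nonneg_nonneg norm_ge_zero order_trans th(1) less_imp_le zero_le_power)
  have d0: "0 \<le> d" using ad K by (meson atLeastAtMost_iff le_refl norm_ge_zero order_trans)
  have V0: "0 \<le> V" using V K by (meson atLeastAtMost_iff le_refl norm_ge_zero order_trans)
  have sB: "complex_of_real B * s = (\<Sum>j=1..K. complex_of_real (beta K \<alpha> j) * P (n - j))"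
    unfolding s_def B_def by (rule sform[OF B0 asum nK])
  have Bsum: "B = (\<Sum>j=1..K. beta K \<alpha> j)" unfolding B_def Bc_def ..
  have be0: "(\<Sum>j=1..K. complex_of_real (beta K \<alpha> j) * e j) = 0"
  proof -
    have "(\<Sum>j=1..K. complex_of_real (beta K \<alpha> j) * e j)
       = (\<Sum>j=1..K. complex_of_real (beta K \<alpha> j) * P (n - j)) - complex_of_real B * s"
      unfolding e_def Bsum by (simp add: right_diff_distrib sum_subtractf sum_distrib_right)
    then show ?thesis using sB by simp
  qed
  define r where "r = (\<Sum>j=1..K. (a j - complex_of_real (\<alpha> j)) * P (n - j))"
  have r_le: "cmod r \<le> K * d * V"
  proof -
    have "cmod r \<le> (\<Sum>j=1..K. cmod ((a j - complex_of_real (\<alpha> j)) * P (n - j)))"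
      unfolding r_def by (rule norm_sum)
    also have "\<dots> \<le> (\<Sum>j=1..K. d * V)"
      by (rule sum_mono) (use ad V d0 in \<open>auto simp: norm_mult intro!: mult_mono\<close>)
    finally show ?thesis by simp
  qed
  have ds: "complex_of_real B * (s' - s) = r"
  proof -
    have "complex_of_real B * (s' - s) = P n - (\<Sum>i=1..K. complex_of_real (\<alpha> i) * (if i \<le> n then P (n - i) else 0))"
      unfolding s_def s'_def B_def by (rule sdiff[OF B0])
    also have "(\<Sum>i=1..K. complex_of_real (\<alpha> i) * (if i \<le> n then P (n - i) else 0)) = (\<Sum>i=1..K. complex_of_real (\<alpha> i) * P (n - i))"
      using nK by (intro sum.cong) auto
    finally show ?thesis unfolding rec r_def by (simp add: left_diff_distrib sum_subtractf)
  qed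
  have ds_le: "cmod (s' - s) \<le> K * d * V"
  proof -
    have "cmod (s' - s) * 1 \<le> cmod (s' - s) * B" using B1 by (intro mult_left_mono) auto
    also have "\<dots> = cmod r" using ds B1 by (metis abs_of_nonneg norm_mult norm_of_real mult.commute order_trans zero_le_one)
    finally show ?thesis using r_le by simp
  qed
  show "cmod (sv K \<alpha> P (Suc n) - sv K \<alpha> P n) \<le> K * d * V" using ds_le s_def s'_def by simp
  have ej: "cmod (e j) \<le> E / \<theta>^(K-1)" if j: "j \<in> {1..K}" for j
  proof -
    have "\<theta>^(K-1) \<le> \<theta>^(j-1)" using j th by (intro power_decreasing) auto
    then have "\<theta>^(K-1) * cmod (e j) \<le> \<theta>^(j-1) * cmod (e j)" by (intro mult_right_mono) auto
    also have "\<dots> \<le> E" using E j unfolding e_def s_def by auto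
    finally show ?thesis using th by (simp add: field_simps mult.commute)
  qed
  define w where "w = (\<lambda>j. \<alpha> j - (c / B) * beta K \<alpha> j)"
  have w0: "0 \<le> w j" if "j \<in> {1..K}" for j
  proof -
    have "(c / B) * beta K \<alpha> j \<le> c * 1" using bp(1,2)[of j] that B1 c
      by (intro mult_mono) (auto simp: field_simps)
    moreover have "c \<le> \<alpha> j" using apos that by auto
    ultimately show ?thesis unfolding w_def by simp
  qed
  have wsum: "(\<Sum>j=1..K. w j) = 1 - c"
  proof -
    have "(\<Sum>j=1..K. (c / B) * beta K \<alpha> j) = (c / B) * B" unfolding Bsum by (simp add: sum_distrib_left)
    then have "(\<Sum>j=1..K. (c / B) * beta K \<alpha> j) = c" using B1 by simp
    then show ?thesis unfolding w_def using asum by (simp add: sum_subtractf)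
  qed
  have ae: "(\<Sum>j=1..K. complex_of_real (\<alpha> j) * e j) = (\<Sum>j=1..K. complex_of_real (w j) * e j)"
  proof -
    have "(\<Sum>j=1..K. complex_of_real (w j) * e j) = (\<Sum>j=1..K. complex_of_real (\<alpha> j) * e j)
        - complex_of_real (c / B) * (\<Sum>j=1..K. complex_of_real (beta K \<alpha> j) * e j)"
      unfolding w_def by (simp add: left_diff_distrib sum_subtractf sum_distrib_left mult.assoc)
    then show ?thesis using be0 by simp
  qed
  have ae_le: "cmod (\<Sum>j=1..K. complex_of_real (\<alpha> j) * e j) \<le> \<theta> * E"
  proof -
    have "cmod (\<Sum>j=1..K. complex_of_real (w j) * e j) \<le> (\<Sum>j=1..K. cmod (complex_of_real (w j) * e j))"
      by (rule norm_sum)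
    also have "\<dots> \<le> (\<Sum>j=1..K. w j * (E / \<theta>^(K-1)))"
    proof (rule sum_mono)
      fix j assume j: "j \<in> {1..K}"
      have "w j * cmod (e j) \<le> w j * (E / \<theta>^(K-1))" using w0[OF j] ej[OF j] by (rule mult_left_mono[rotated])
      then show "cmod (complex_of_real (w j) * e j) \<le> w j * (E / \<theta>^(K-1))" using w0[OF j] by (simp add: norm_mult)
    qed
    also have "\<dots> = (\<Sum>j=1..K. w j) * (E / \<theta>^(K-1))" by (rule sum_distrib_right[symmetric])
    also have "\<dots> = (1 - c) * (E / \<theta>^(K-1))" using wsum by simp
    also have "\<dots> \<le> \<theta> * E"
    proof -
      have "(1 - c) * E \<le> \<theta>^K * E" using th E0 by (intro mult_right_mono) auto
      also have "\<theta>^K = \<theta> * \<theta>^(K-1)" using K by (cases K) auto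
      finally show ?thesis using th by (simp add: field_simps)
    qed
    finally show ?thesis using ae by simp
  qed
  have Pn: "P n - s = (\<Sum>j=1..K. complex_of_real (\<alpha> j) * e j) + r"
  proof -
    have "(\<Sum>j=1..K. complex_of_real (\<alpha> j) * e j) = (\<Sum>j=1..K. complex_of_real (\<alpha> j) * P (n - j)) - s"
      unfolding e_def using asum
      by (simp add: right_diff_distrib sum_subtractf sum_distrib_right[symmetric] flip: of_real_sum)
    then show ?thesis unfolding rec r_def by (simp add: left_diff_distrib sum_subtractf)
  qed
  have Pn_le: "cmod (P n - s) \<le> \<theta> * E + K * d * V"
    using Pn ae_le r_le norm_triangle_ineq[of "\<Sum>j=1..K. complex_of_real (\<alpha> j) * e j" r] by simp
  show "\<forall>j\<in>{1..K}. \<theta>^(j-1) * cmod (P (Suc n - j) - sv K \<alpha> P (Suc n)) \<le> \<theta> * E + 2 * real K * d * V"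
  proof (intro ballI)
    fix j assume j: "j \<in> {1..K}"
    show "\<theta>^(j-1) * cmod (P (Suc n - j) - sv K \<alpha> P (Suc n)) \<le> \<theta> * E + 2 * real K * d * V"
    proof (cases "j = 1")
      case True
      have "cmod (P n - s') \<le> cmod (P n - s) + cmod (s' - s)"
        using norm_triangle_ineq4[of "P n - s" "s' - s"] by (simp add: algebra_simps)
      then show ?thesis using True Pn_le ds_le s'_def by simp
    next
      case False
      then obtain j' where jj: "j = Suc j'" and j': "j' \<in> {1..K}" using j by (cases j) auto
      have idx: "Suc n - j = n - j'" using jj by simp
      have hh: "cmod (P (n - j') - s') \<le> cmod (e j') + cmod (s' - s)"
        using norm_triangle_ineq4[of "e j'" "s' - s"] unfolding e_def by (simp add: algebra_simps)
      have h1: "\<theta>^j' * cmod (P (n - j') - s') \<le> \<theta>^j' * cmod (e j') + \<theta>^j' * cmod (s' - s)"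
        using mult_left_mono[OF hh, of "\<theta>^j'"] th by (simp add: distrib_left)
      have h2: "\<theta>^j' * cmod (e j') \<le> \<theta> * E"
      proof -
        have "\<theta>^j' = \<theta> * \<theta>^(j'-1)" using j' by (cases j') auto
        moreover have "\<theta>^(j'-1) * cmod (e j') \<le> E" using E j' unfolding e_def s_def by auto
        ultimately show ?thesis using th by (simp add: mult.assoc mult_left_mono)
      qed
      have h3: "\<theta>^j' * cmod (s' - s) \<le> 1 * (K * d * V)"
        using ds_le th by (intro mult_mono) (auto simp: power_le_one)
      have "0 \<le> real K * d * V" using d0 V0 by simp
      then have "\<theta>^j' * cmod (P (n - j') - s') \<le> \<theta> * E + 2 * real K * d * V" using h1 h2 h3 by linarith
      then show ?thesis using jj idx s'_def by simp
    qed
  qed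
qed


lemma cone_step:
  fixes \<alpha> :: "nat \<Rightarrow> real" and a P :: "nat \<Rightarrow> complex"
  assumes K: "1 \<le> K" and apos: "\<forall>j\<in>{1..K}. c \<le> \<alpha> j" and c: "0 < c"
    and asum: "(\<Sum>j=1..K. \<alpha> j) = 1"
    and th: "0 < \<theta>" "\<theta> < 1" "1 - c \<le> \<theta>^K"
    and eta: "0 < \<eta>" "\<eta> \<le> \<theta>^(K-1) / 2"
    and d: "0 \<le> d" "4 * real K * d \<le> \<eta> * (1 - \<theta>)"
    and nK: "K \<le> n" and rec: "P n = (\<Sum>j=1..K. a j * P (n - j))"
    and ad: "\<forall>j\<in>{1..K}. cmod (a j - \<alpha> j) \<le> d"
    and s0: "sv K \<alpha> P n \<noteq> 0"
    and E: "\<forall>j\<in>{1..K}. \<theta>^(j-1) * cmod (P (n - j) - sv K \<alpha> P n) \<le> \<eta> * cmod (sv K \<alpha> P n)"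
  shows "sv K \<alpha> P (Suc n) \<noteq> 0 \<and>
    (\<forall>j\<in>{1..K}. \<theta>^(j-1) * cmod (P (Suc n - j) - sv K \<alpha> P (Suc n)) \<le> \<eta> * cmod (sv K \<alpha> P (Suc n)))"
proof -
  define s where "s = sv K \<alpha> P n"
  define s' where "s' = sv K \<alpha> P (Suc n)"
  define S where "S = cmod s"
  define x where "x = real K * d"
  have S0: "0 < S" using s0 S_def s_def by simp
  have x0: "0 \<le> x" using d x_def by simp
  have thK: "\<theta>^(K-1) \<le> 1" using th by (simp add: power_le_one)
  have eta1: "\<eta> \<le> 1/2" using eta thK by simp
  have V: "\<forall>j\<in>{1..K}. cmod (P (n - j)) \<le> 3/2 * S"
  proof
    fix j assume j: "j \<in> {1..K}"
    have "\<theta>^(K-1) \<le> \<theta>^(j-1)" using j th by (intro power_decreasing) auto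
    then have "\<theta>^(K-1) * cmod (P (n - j) - s) \<le> \<theta>^(j-1) * cmod (P (n - j) - s)" by (intro mult_right_mono) auto
    also have "\<dots> \<le> \<eta> * S" using E j s_def S_def by auto
    also have "\<dots> \<le> \<theta>^(K-1) / 2 * S" using eta S0 by (intro mult_right_mono) auto
    finally have "cmod (P (n - j) - s) \<le> S / 2" using th by (simp add: field_simps)
    moreover have "cmod (P (n - j)) \<le> cmod (P (n - j) - s) + S"
      using norm_triangle_ineq[of "P (n - j) - s" s] S_def by simp
    ultimately show "cmod (P (n - j)) \<le> 3/2 * S" by simp
  qed
  note st = step[OF K apos c asum th nK rec ad V, of "\<eta> * S"]
  have E': "\<forall>j\<in>{1..K}. \<theta>^(j-1) * cmod (P (n - j) - sv K \<alpha> P n) \<le> \<eta> * S" using E s_def S_def by simp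
  have ds: "cmod (s' - s) \<le> x * (3/2 * S)" using st(1)[OF E'] s_def s'_def x_def by simp
  have ne: "\<forall>j\<in>{1..K}. \<theta>^(j-1) * cmod (P (Suc n - j) - s') \<le> \<theta> * (\<eta> * S) + 2 * x * (3/2 * S)"
    using st(2)[OF E'] s'_def x_def by (simp add: mult.assoc)
  have S': "S - x * (3/2 * S) \<le> cmod s'"
    using ds norm_triangle_ineq2[of s s'] S_def by (simp add: norm_minus_commute)
  have x8: "x \<le> 1/8"
  proof -
    have "\<eta> * (1 - \<theta>) \<le> (1/2) * 1" using eta1 th eta by (intro mult_mono) auto
    then show ?thesis using d x_def by simp
  qed
  have "x * (3/2 * S) \<le> (1/8) * (3/2 * S)" using x8 S0 by (intro mult_right_mono) auto
  then have pos: "0 < cmod s'" using S' S0 by linarith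
  have key: "\<theta> * (\<eta> * S) + 2 * x * (3/2 * S) \<le> \<eta> * cmod s'"
  proof -
    have a1: "\<eta> * (S - x * (3/2 * S)) \<le> \<eta> * cmod s'" using S' eta by (intro mult_left_mono) auto
    have a2: "\<eta> * (x * S) \<le> (1/2) * (x * S)" using eta1 x0 S0 by (intro mult_right_mono) auto
    have a3': "4 * x * S \<le> \<eta> * (1 - \<theta>) * S" using d x_def S0 by (intro mult_right_mono) auto
    have a3: "4 * (x * S) \<le> \<eta> * S - \<theta> * (\<eta> * S)" using a3' by (simp add: algebra_simps)
    have e1: "\<theta> * (\<eta> * S) + 2 * x * (3/2 * S) = \<theta> * (\<eta> * S) + 3 * (x * S)" by (simp add: algebra_simps)
    have e2: "\<eta> * (S - x * (3/2 * S)) = \<eta> * S - 3/2 * (\<eta> * (x * S))" by (simp add: algebra_simps)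
    have q0: "0 \<le> x * S" using x0 S0 by simp
    have "\<theta> * (\<eta> * S) + 2 * x * (3/2 * S) \<le> \<eta> * (S - x * (3/2 * S))"
      unfolding e1 e2 using a2 a3 q0 by linarith
    then show ?thesis using a1 by linarith
  qed
  show ?thesis using pos ne key s'_def by force
qed


lemma cone_iter:
  fixes \<alpha> :: "nat \<Rightarrow> real" and a P :: "nat \<Rightarrow> complex"
  assumes K: "1 \<le> K" and apos: "\<forall>j\<in>{1..K}. c \<le> \<alpha> j" and c: "0 < c"
    and asum: "(\<Sum>j=1..K. \<alpha> j) = 1"
    and th: "0 < \<theta>" "\<theta> < 1" "1 - c \<le> \<theta>^K"
    and eta: "0 < \<eta>" "\<eta> \<le> \<theta>^(K-1) / 2"
    and d: "0 \<le> d" "4 * real K * d \<le> \<eta> * (1 - \<theta>)"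
    and n0: "K \<le> n0" and rec: "\<forall>n\<ge>n0. P n = (\<Sum>j=1..K. a j * P (n - j))"
    and ad: "\<forall>j\<in>{1..K}. cmod (a j - \<alpha> j) \<le> d"
    and s0: "sv K \<alpha> P n0 \<noteq> 0"
    and E: "\<forall>j\<in>{1..K}. \<theta>^(j-1) * cmod (P (n0 - j) - sv K \<alpha> P n0) \<le> \<eta> * cmod (sv K \<alpha> P n0)"
  shows "\<forall>n\<ge>n0. P n \<noteq> 0"
proof -
  have C: "sv K \<alpha> P (n0 + m) \<noteq> 0 \<and>
    (\<forall>j\<in>{1..K}. \<theta>^(j-1) * cmod (P (n0 + m - j) - sv K \<alpha> P (n0 + m)) \<le> \<eta> * cmod (sv K \<alpha> P (n0 + m)))" for m
  proof (induction m)
    case 0 then show ?case using s0 E by simp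
  next
    case (Suc m)
    have "K \<le> n0 + m" using n0 by simp
    from cone_step[OF K apos c asum th eta d this _ ad] Suc rec show ?case by simp
  qed
  have "\<theta>^(K-1) \<le> 1" using th by (simp add: power_le_one)
  then have eta1: "\<eta> < 1" using eta by linarith
  show ?thesis
  proof (intro allI impI)
    fix n assume "n0 \<le> n"
    then obtain m where m: "Suc n = n0 + Suc m" by (metis add_Suc_right le_Suc_ex)
    have "sv K \<alpha> P (Suc n) \<noteq> 0" and "\<theta>^0 * cmod (P (Suc n - 1) - sv K \<alpha> P (Suc n)) \<le> \<eta> * cmod (sv K \<alpha> P (Suc n))"
    proof -
      from C[of "Suc m"] have c1: "sv K \<alpha> P (Suc n) \<noteq> 0" and
        c2: "\<forall>j\<in>{1..K}. \<theta>^(j-1) * cmod (P (Suc n - j) - sv K \<alpha> P (Suc n)) \<le> \<eta> * cmod (sv K \<alpha> P (Suc n))"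
        unfolding m[symmetric] by auto
      have "1 \<in> {1..K}" using K by simp
      from bspec[OF c2 this] have "\<theta>^(1-1) * cmod (P (Suc n - 1) - sv K \<alpha> P (Suc n)) \<le> \<eta> * cmod (sv K \<alpha> P (Suc n))" .
      then show "sv K \<alpha> P (Suc n) \<noteq> 0" and "\<theta>^0 * cmod (P (Suc n - 1) - sv K \<alpha> P (Suc n)) \<le> \<eta> * cmod (sv K \<alpha> P (Suc n))"
        using c1 by auto
    qed
    then show "P n \<noteq> 0" using eta1 by auto
  qed
qed

lemma conv0:
  fixes \<alpha> :: "nat \<Rightarrow> real" and P :: "nat \<Rightarrow> complex"
  assumes K: "1 \<le> K" and apos: "\<forall>j\<in>{1..K}. c \<le> \<alpha> j" and c: "0 < c"
    and asum: "(\<Sum>j=1..K. \<alpha> j) = 1"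
    and th: "0 < \<theta>" "\<theta> < 1" "1 - c \<le> \<theta>^K"
    and rec: "\<forall>n\<ge>K. P n = (\<Sum>j=1..K. complex_of_real (\<alpha> j) * P (n - j))"
  shows "sv K \<alpha> P (K + m) = sv K \<alpha> P K \<and>
    (\<forall>j\<in>{1..K}. \<theta>^(j-1) * cmod (P (K + m - j) - sv K \<alpha> P K) \<le> \<theta>^m * (\<Sum>i=1..K. cmod (P (K - i) - sv K \<alpha> P K)))"
proof (induction m)
  case 0
  have "\<theta>^(j-1) * cmod (P (K - j) - sv K \<alpha> P K) \<le> (\<Sum>i=1..K. cmod (P (K - i) - sv K \<alpha> P K))"
    if j: "j \<in> {1..K}" for j
  proof -
    have "\<theta>^(j-1) * cmod (P (K - j) - sv K \<alpha> P K) \<le> 1 * cmod (P (K - j) - sv K \<alpha> P K)"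
      using th by (intro mult_right_mono) (auto simp: power_le_one)
    also have "\<dots> \<le> (\<Sum>i=1..K. cmod (P (K - i) - sv K \<alpha> P K))"
      using j by (simp only: mult_1) (rule member_le_sum, auto)
    finally show ?thesis .
  qed
  then show ?case by simp
next
  case (Suc m)
  define n where "n = K + m"
  have nK: "K \<le> n" using n_def by simp
  have ad: "\<forall>j\<in>{1..K}. cmod (complex_of_real (\<alpha> j) - complex_of_real (\<alpha> j)) \<le> 0" by simp
  have V: "\<forall>j\<in>{1..K}. cmod (P (n - j)) \<le> (\<Sum>i=1..K. cmod (P (n - i)))"
    by (auto intro!: member_le_sum)
  have E: "\<forall>j\<in>{1..K}. \<theta>^(j-1) * cmod (P (n - j) - sv K \<alpha> P n) \<le> \<theta>^m * (\<Sum>i=1..K. cmod (P (K - i) - sv K \<alpha> P K))"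
    using Suc.IH n_def by simp
  note st = step[OF K apos c asum th nK rec[rule_format, OF nK] ad V E]
  have "sv K \<alpha> P (Suc n) = sv K \<alpha> P n" using st(1) by simp
  then show ?case using st(2) Suc.IH n_def by (simp add: mult.assoc)
qed

lemma conv0_ex:
  fixes \<alpha> :: "nat \<Rightarrow> real" and P :: "nat \<Rightarrow> complex"
  assumes K: "1 \<le> K" and apos: "\<forall>j\<in>{1..K}. c \<le> \<alpha> j" and c: "0 < c"
    and asum: "(\<Sum>j=1..K. \<alpha> j) = 1"
    and th: "0 < \<theta>" "\<theta> < 1" "1 - c \<le> \<theta>^K"
    and rec: "\<forall>n\<ge>K. P n = (\<Sum>j=1..K. complex_of_real (\<alpha> j) * P (n - j))"
    and s0: "sv K \<alpha> P K \<noteq> 0" and eta: "0 < \<eta>"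
  shows "\<exists>n0\<ge>K. sv K \<alpha> P n0 = sv K \<alpha> P K \<and>
    (\<forall>j\<in>{1..K}. \<theta>^(j-1) * cmod (P (n0 - j) - sv K \<alpha> P n0) < \<eta> * cmod (sv K \<alpha> P n0))"
proof -
  define E0 where "E0 = (\<Sum>i=1..K. cmod (P (K - i) - sv K \<alpha> P K))"
  have E00: "0 \<le> E0" unfolding E0_def by (intro sum_nonneg) auto
  define y where "y = \<eta> * cmod (sv K \<alpha> P K) / (E0 + 1)"
  have y0: "0 < y" using eta s0 E00 unfolding y_def by simp
  obtain m where m: "\<theta>^m < y" using real_arch_pow_inv[OF y0 th(2)] by blast
  have "\<theta>^m * E0 < \<eta> * cmod (sv K \<alpha> P K)"
  proof -
    have "\<theta>^m * E0 \<le> \<theta>^m * (E0 + 1)" using th by simp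
    also have "\<dots> < y * (E0 + 1)" using m E00 by (intro mult_strict_right_mono) auto
    also have "\<dots> = \<eta> * cmod (sv K \<alpha> P K)" using E00 unfolding y_def by simp
    finally show ?thesis .
  qed
  moreover note cv = conv0[OF K apos c asum th rec, of m]
  ultimately show ?thesis
    by (intro exI[of _ "K + m"]) (auto simp: E0_def intro: le_less_trans)
qed



lemma bl_tendsto: "(f \<longlongrightarrow> l0) F \<Longrightarrow> ((\<lambda>x. bl k t (f x) r) \<longlongrightarrow> bl k t l0 r) F"
  unfolding bl_def by (cases "r = 0") (auto intro!: tendsto_intros)

lemma Pl_Suc: "Pl k t l (Suc n) = (\<Sum>r\<le>n. (-1)^r * bl k t l r * Pl k t l (n - r))"
  unfolding Pl_def by (rule det_thg_rec)

lemma Pl_0: "Pl k t l 0 = 1"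
  unfolding Pl_def by (rule det_thg0)

lemma Pl_tendsto: "(f \<longlongrightarrow> l0) F \<Longrightarrow> ((\<lambda>x. Pl k t (f x) n) \<longlongrightarrow> Pl k t l0 n) F"
proof (induction n rule: less_induct)
  case (less n)
  show ?case
  proof (cases n)
    case 0 then show ?thesis by (simp add: Pl_0)
  next
    case (Suc m)
    have "((\<lambda>x. \<Sum>r\<le>m. (-1)^r * bl k t (f x) r * Pl k t (f x) (m - r)) \<longlongrightarrow>
        (\<Sum>r\<le>m. (-1)^r * bl k t l0 r * Pl k t l0 (m - r))) F"
    proof (rule tendsto_sum)
      fix r assume "r \<in> {..m}"
      then have "m - r < n" using Suc by simp
      then show "((\<lambda>x. (-1)^r * bl k t (f x) r * Pl k t (f x) (m - r)) \<longlongrightarrow> (-1)^r * bl k t l0 r * Pl k t l0 (m - r)) F"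
        by (intro tendsto_mult tendsto_const bl_tendsto less.IH less.prems)
    qed
    then show ?thesis unfolding Suc Pl_Suc .
  qed
qed

lemma sv_tendsto: "(f \<longlongrightarrow> l0) F \<Longrightarrow> ((\<lambda>x. sv K \<alpha> (Pl k t (f x)) n) \<longlongrightarrow> sv K \<alpha> (Pl k t l0) n) F"
  unfolding sv_def Qs_def divide_inverse by (intro tendsto_mult tendsto_const tendsto_diff tendsto_sum Pl_tendsto)


lemma Pl_hom:
  assumes "k + 2 \<le> n"
  shows "Pl k t l n = (\<Sum>j=1..k+2. acoef t l j * Pl k t l (n - j))"
proof -
  have "fps_nth (Mc k t) n = 0" using assms by (simp add: Mc_def)
  moreover have "(\<Sum>i=1..k+2. acoef t l i * (if i \<le> n then Pl k t l (n - i) else 0)) = (\<Sum>j=1..k+2. acoef t l j * Pl k t l (n - j))"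
    using assms by (intro sum.cong) auto
  ultimately show ?thesis using Pl_rec[of k t l n] by simp
qed

lemma sv_L:
  fixes \<alpha> :: "nat \<Rightarrow> real"
  assumes B: "Bc (k+2) \<alpha> \<noteq> 0" and ac: "\<forall>i. acoef t l i = complex_of_real (\<alpha> i)"
  shows "complex_of_real (Bc (k+2) \<alpha>) * sv (k+2) \<alpha> (Pl k t l) n = (\<Sum>m<n. fps_nth (Mc k t) m)"
proof (induction n)
  case 0 then show ?case by (simp add: sv_def Qs_def)
next
  case (Suc n)
  have "complex_of_real (Bc (k+2) \<alpha>) * (sv (k+2) \<alpha> (Pl k t l) (Suc n) - sv (k+2) \<alpha> (Pl k t l) n)
     = Pl k t l n - (\<Sum>i=1..k+2. complex_of_real (\<alpha> i) * (if i \<le> n then Pl k t l (n - i) else 0))"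
    by (rule sdiff[OF B])
  also have "\<dots> = fps_nth (Mc k t) n" using Pl_rec[of k t l n] ac by simp
  finally show ?case using Suc.IH by (simp add: algebra_simps)
qed

theorem proposition6:
  fixes k :: nat and t :: real
  assumes "0 < t" and "t < 1"
  shows "complex_of_real (- (1 - t) / (real k + 2 - (real k + 1) * t)) \<notin> limit_set (A_mat k t)"
proof
  define K where "K = k + 2"
  define D0 where "D0 = real k + 2 - (real k + 1) * t"
  define L where "L = - (1 - t) / D0"
  define p where "p = - L * (1 - t)"
  define \<alpha> where "\<alpha> = (\<lambda>j::nat. if j = 1 then t - L else p)"
  define c where "c = min (t - L) p"
  have D0: "0 < D0"
  proof -
    have "(real k + 1) * t < (real k + 1) * 1" using assms by (intro mult_strict_left_mono) auto
    then have "(real k + 1) * t < real k + 1" by (simp only: mult_1_right)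
    then show ?thesis unfolding D0_def by linarith
  qed
  have L0: "L < 0" unfolding L_def using D0 assms by (simp add: field_simps)
  have p0: "0 < p" unfolding p_def using L0 assms by (simp add: mult_neg_pos)
  have c0: "0 < c" unfolding c_def using p0 L0 assms by simp
  have K1: "1 \<le> K" unfolding K_def by simp
  have apos: "\<forall>j\<in>{1..K}. c \<le> \<alpha> j" unfolding \<alpha>_def c_def by auto
  have LD: "L * D0 = - (1 - t)" unfolding L_def using D0 by simp
  have asum: "(\<Sum>j=1..K. \<alpha> j) = 1"
  proof -
    have "(\<Sum>j=1..K. \<alpha> j) = \<alpha> 1 + (\<Sum>j=Suc 1..K. \<alpha> j)" using K1 by (rule sum.atLeast_Suc_atMost)
    also have "(\<Sum>j=Suc 1..K. \<alpha> j) = (\<Sum>j=Suc 1..K. p)" unfolding \<alpha>_def by (intro sum.cong) auto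
    also have "\<dots> = (real k + 1) * p" unfolding K_def by simp
    finally have "(\<Sum>j=1..K. \<alpha> j) = t - L + (real k + 1) * p" unfolding \<alpha>_def by simp
    also have "\<dots> = t - L * D0" unfolding p_def D0_def by (simp add: algebra_simps)
    finally show ?thesis using LD by simp
  qed
  have c1: "c \<le> 1"
  proof -
    have "c \<le> \<alpha> 1" using apos K1 by auto
    also have "\<alpha> 1 \<le> (\<Sum>j=1..K. \<alpha> j)" using K1 apos c0
      by (intro member_le_sum) (auto intro: order_trans[OF less_imp_le[OF c0]])
    finally show ?thesis using asum by simp
  qed
  define \<theta> where "\<theta> = 1 - c / (2 * real K)"
  have th0: "0 < \<theta>"
  proof -
    have "c / (2 * real K) \<le> 1 / 2" using c1 K1 c0 by (simp add: field_simps)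
    then show ?thesis unfolding \<theta>_def by simp
  qed
  have th1: "\<theta> < 1" unfolding \<theta>_def using c0 K1 by simp
  have thK: "1 - c \<le> \<theta>^K"
  proof -
    have "-1 \<le> - (c / (2 * real K))" using th0 unfolding \<theta>_def by simp
    from Bernoulli_inequality[OF this, of K]
    have "1 + real K * - (c / (2 * real K)) \<le> \<theta>^K" unfolding \<theta>_def by simp
    moreover have "real K * (c / (2 * real K)) = c / 2" using K1 by simp
    ultimately show ?thesis using c0 by simp
  qed
  define \<eta> where "\<eta> = \<theta>^(K-1) / 2"
  have eta0: "0 < \<eta>" unfolding \<eta>_def using th0 by simp
  define d0 where "d0 = \<eta> * (1 - \<theta>) / (4 * real K)"
  have d00: "0 < d0" unfolding d0_def using eta0 th1 K1 by simp
  define Lc where "Lc = complex_of_real L"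
  have acL: "\<forall>i. acoef t Lc i = complex_of_real (\<alpha> i)"
    unfolding acoef_def \<alpha>_def Lc_def p_def by (auto simp: algebra_simps)
  have ad: "\<forall>j\<in>{1..K}. cmod (acoef t l j - complex_of_real (\<alpha> j)) \<le> cmod (l - Lc)" for l
  proof
    fix j assume j: "j \<in> {1..K}"
    show "cmod (acoef t l j - complex_of_real (\<alpha> j)) \<le> cmod (l - Lc)"
    proof (cases "j = 1")
      case True
      then have "acoef t l j - complex_of_real (\<alpha> j) = - (l - Lc)"
        unfolding acoef_def \<alpha>_def Lc_def by simp
      then show ?thesis by (simp only: norm_minus_cancel)
    next
      case False
      then have "acoef t l j - complex_of_real (\<alpha> j) = - (l - Lc) * complex_of_real (1 - t)"
        unfolding acoef_def \<alpha>_def Lc_def p_def by (simp add: algebra_simps)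
      then have "cmod (acoef t l j - complex_of_real (\<alpha> j)) = cmod (l - Lc) * (1 - t)"
      proof -
        have "1 - complex_of_real t = complex_of_real (1 - t)" by simp
        then have "cmod (1 - complex_of_real t) = 1 - t" using assms by (simp only: norm_of_real)
        then show ?thesis unfolding \<open>acoef t l j - complex_of_real (\<alpha> j) = - (l - Lc) * complex_of_real (1 - t)\<close>
          using assms by (simp add: norm_mult norm_minus_commute)
      qed
      also have "\<dots> \<le> cmod (l - Lc) * 1" using assms by (intro mult_left_mono) auto
      finally show ?thesis by simp
    qed
  qed
  have recl: "\<forall>n\<ge>K. Pl k t l n = (\<Sum>j=1..K. acoef t l j * Pl k t l (n - j))" for l
    unfolding K_def using Pl_hom by blast
  have recL: "\<forall>n\<ge>K. Pl k t Lc n = (\<Sum>j=1..K. complex_of_real (\<alpha> j) * Pl k t Lc (n - j))"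
    using recl[of Lc] acL by simp
  have apos0: "\<forall>j\<in>{1..K}. 0 \<le> \<alpha> j" using apos c0 by force
  have B1: "1 \<le> Bc K \<alpha>" by (rule beta_props(3)[OF apos0 asum K1])
  have svK: "sv K \<alpha> (Pl k t Lc) K \<noteq> 0"
  proof -
    have "complex_of_real (Bc K \<alpha>) * sv K \<alpha> (Pl k t Lc) K = (\<Sum>m<K. fps_nth (Mc k t) m)"
      unfolding K_def by (rule sv_L) (use B1 acL K_def in auto)
    also have "\<dots> = fps_nth (Mc k t) 0 + (\<Sum>m<Suc k. fps_nth (Mc k t) (Suc m))"
      unfolding K_def add_2_eq_Suc' by (rule sum.lessThan_Suc_shift)
    also have "fps_nth (Mc k t) 0 = 1" by (simp add: Mc_def)
    also have "(\<Sum>m<Suc k. fps_nth (Mc k t) (Suc m)) = (\<Sum>m<Suc k. 1 - complex_of_real t)"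
      by (intro sum.cong) (auto simp: Mc_def)
    finally have "complex_of_real (Bc K \<alpha>) * sv K \<alpha> (Pl k t Lc) K = complex_of_real (1 + (real k + 1) * (1 - t))"
      by simp
    moreover have "1 + (real k + 1) * (1 - t) \<noteq> 0" using assms by (smt (verit) mult_nonneg_nonneg of_nat_0_le_iff)
    ultimately show ?thesis by (metis mult_zero_right of_real_eq_0_iff)
  qed
  obtain n0 where n0: "K \<le> n0" and sn0: "sv K \<alpha> (Pl k t Lc) n0 = sv K \<alpha> (Pl k t Lc) K"
    and En0: "\<forall>j\<in>{1..K}. \<theta>^(j-1) * cmod (Pl k t Lc (n0 - j) - sv K \<alpha> (Pl k t Lc) n0) < \<eta> * cmod (sv K \<alpha> (Pl k t Lc) n0)"
    using conv0_ex[OF K1 apos c0 asum th0 th1 thK recL svK eta0] by blast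
  assume "complex_of_real (- (1 - t) / (real k + 2 - (real k + 1) * t)) \<in> limit_set (A_mat k t)"
  then obtain idx \<mu> where idx: "strict_mono idx"
    and ev: "\<forall>m. eigenvalue (map_mat complex_of_real (A_mat k t (idx m))) (\<mu> m)"
    and lim: "\<mu> \<longlonglongrightarrow> Lc"
    unfolding limit_set_def Lc_def L_def D0_def by blast
  have ev1: "\<forall>\<^sub>F m in sequentially. \<forall>j\<in>{1..K}. \<theta>^(j-1) * cmod (Pl k t (\<mu> m) (n0 - j) - sv K \<alpha> (Pl k t (\<mu> m)) n0)
      < \<eta> * cmod (sv K \<alpha> (Pl k t (\<mu> m)) n0)"
  proof (rule eventually_ball_finite)
    show "finite {1..K}" by simp
    show "\<forall>j\<in>{1..K}. \<forall>\<^sub>F m in sequentially. \<theta>^(j-1) * cmod (Pl k t (\<mu> m) (n0 - j) - sv K \<alpha> (Pl k t (\<mu> m)) n0)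
      < \<eta> * cmod (sv K \<alpha> (Pl k t (\<mu> m)) n0)"
    proof
      fix j assume j: "j \<in> {1..K}"
      have "((\<lambda>m. \<eta> * cmod (sv K \<alpha> (Pl k t (\<mu> m)) n0) - \<theta>^(j-1) * cmod (Pl k t (\<mu> m) (n0 - j) - sv K \<alpha> (Pl k t (\<mu> m)) n0))
         \<longlongrightarrow> \<eta> * cmod (sv K \<alpha> (Pl k t Lc) n0) - \<theta>^(j-1) * cmod (Pl k t Lc (n0 - j) - sv K \<alpha> (Pl k t Lc) n0)) sequentially"
        by (intro tendsto_intros sv_tendsto Pl_tendsto lim)
      moreover have "0 < \<eta> * cmod (sv K \<alpha> (Pl k t Lc) n0) - \<theta>^(j-1) * cmod (Pl k t Lc (n0 - j) - sv K \<alpha> (Pl k t Lc) n0)"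
        using En0 j by auto
      ultimately have "\<forall>\<^sub>F m in sequentially. 0 < \<eta> * cmod (sv K \<alpha> (Pl k t (\<mu> m)) n0) - \<theta>^(j-1) * cmod (Pl k t (\<mu> m) (n0 - j) - sv K \<alpha> (Pl k t (\<mu> m)) n0)"
        by (rule order_tendstoD(1))
      then show "\<forall>\<^sub>F m in sequentially. \<theta>^(j-1) * cmod (Pl k t (\<mu> m) (n0 - j) - sv K \<alpha> (Pl k t (\<mu> m)) n0)
        < \<eta> * cmod (sv K \<alpha> (Pl k t (\<mu> m)) n0)"
        by (rule eventually_mono) simp
    qed
  qed
  have ev2: "\<forall>\<^sub>F m in sequentially. 0 < cmod (sv K \<alpha> (Pl k t (\<mu> m)) n0)"
  proof -
    have "((\<lambda>m. cmod (sv K \<alpha> (Pl k t (\<mu> m)) n0)) \<longlongrightarrow> cmod (sv K \<alpha> (Pl k t Lc) n0)) sequentially"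
      by (intro tendsto_intros sv_tendsto lim)
    moreover have "0 < cmod (sv K \<alpha> (Pl k t Lc) n0)" using sn0 svK by simp
    ultimately show ?thesis by (rule order_tendstoD(1))
  qed
  have ev3: "\<forall>\<^sub>F m in sequentially. cmod (\<mu> m - Lc) < d0"
  proof -
    have "((\<lambda>m. cmod (\<mu> m - Lc)) \<longlongrightarrow> cmod (Lc - Lc)) sequentially"
      by (intro tendsto_intros lim)
    then show ?thesis using d00 by (intro order_tendstoD(2)) auto
  qed
  have ev4: "\<forall>\<^sub>F m in sequentially. n0 \<le> m" by (rule eventually_ge_at_top)
  obtain m where m1: "\<forall>j\<in>{1..K}. \<theta>^(j-1) * cmod (Pl k t (\<mu> m) (n0 - j) - sv K \<alpha> (Pl k t (\<mu> m)) n0)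
      < \<eta> * cmod (sv K \<alpha> (Pl k t (\<mu> m)) n0)"
    and m2: "0 < cmod (sv K \<alpha> (Pl k t (\<mu> m)) n0)" and m3: "cmod (\<mu> m - Lc) < d0" and m4: "n0 \<le> m"
    using eventually_happens'[OF trivial_limit_sequentially eventually_conj[OF ev1 eventually_conj[OF ev2 eventually_conj[OF ev3 ev4]]]]
    by blast
  have dd: "4 * real K * cmod (\<mu> m - Lc) \<le> \<eta> * (1 - \<theta>)"
  proof -
    have "4 * real K * cmod (\<mu> m - Lc) \<le> 4 * real K * d0" using m3 by (intro mult_left_mono) auto
    also have "\<dots> = \<eta> * (1 - \<theta>)" unfolding d0_def using K1 by simp
    finally show ?thesis .
  qed
  have rec': "\<forall>n\<ge>n0. Pl k t (\<mu> m) n = (\<Sum>j=1..K. acoef t (\<mu> m) j * Pl k t (\<mu> m) (n - j))"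
    using recl[of "\<mu> m"] n0 by auto
  have "\<forall>n\<ge>n0. Pl k t (\<mu> m) n \<noteq> 0"
    by (rule cone_iter[OF K1 apos c0 asum th0 th1 thK eta0 _ _ dd n0 rec' ad[of "\<mu> m"]])
       (use m1 m2 in \<open>auto simp: \<eta>_def less_imp_le\<close>)
  moreover have "n0 \<le> idx m" using m4 seq_suble[OF idx, of m] by simp
  ultimately have "Pl k t (\<mu> m) (idx m) \<noteq> 0" by blast
  moreover have "Pl k t (\<mu> m) (idx m) = 0"
  proof -
    have A: "map_mat complex_of_real (A_mat k t (idx m)) \<in> carrier_mat (idx m) (idx m)"
      by (simp add: A_mat_def toeplitz_hessenberg_def)
    have "det (char_matrix (map_mat complex_of_real (A_mat k t (idx m))) (\<mu> m)) = 0"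
      using ev eigenvalue_det[OF A] by blast
    then show ?thesis unfolding char_eq Pl_def .
  qed
  ultimately show False by contradiction
qed


end
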